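(* Let $a\in\mathbb{C}$ with $|a-\tfrac14|\le\tfrac14$ and $a\neq0$, and let $\varphi(z)=az^2+(1-2a)z+a$. Then the iterates $\varphi_n$ converge to $1$ uniformly on the entire open disk $\mathbb{D}$.
   Context: $\mathbb{D}$ is the open unit disk; $\varphi_n$ denotes the $n$-th iterate of $\varphi$. Uniform convergence on $\mathbb{D}$ means $\lim_{n\to\infty}\sup_{z\in\mathbb{D}}|\varphi_n(z)-1|=0$. *)

theory Defs
  imports "HOL-Analysis.Analysis"
begin

end

theory Submission
  imports Defs
begin

lemma Re_inv: "Re (1/(u::complex)) = Re u / (cmod u)^2"
  by (simp add: Re_divide cmod_power2)

context fixes a :: complex
  assumes A1: "cmod (a - 1/4) \<le> 1/4" and A2: "a \<noteq> 0"
begin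

lemma a_sq: "(cmod a)^2 \<le> Re a / 2"
proof -
  have "(cmod (a - 1/4))^2 \<le> (1/4)^2" using A1 by (intro power_mono) auto
  moreover have "(cmod (a - 1/4))^2 = (Re a - 1/4)^2 + (Im a)^2" by (simp add: cmod_power2)
  moreover have "(cmod a)^2 = (Re a)^2 + (Im a)^2" by (simp add: cmod_power2)
  ultimately show ?thesis by (simp add: power2_eq_square algebra_simps)
qed

lemma a_pos: "Re a > 0"
proof -
  have "(cmod a)^2 > 0" using A2 by simp
  thus ?thesis using a_sq by linarith
qed

lemma a_le: "cmod a \<le> 1/2"
proof -
  have "cmod a * cmod a \<le> cmod a * (1/2)" using a_sq abs_Re_le_cmod[of a]
    unfolding power2_eq_square by linarith
  thus ?thesis using A2 by simp
qed

lemma b_ge: "Re (1/a) \<ge> 2"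
proof -
  have "Re (1/a) = Re a / (cmod a)^2" by (rule Re_inv)
  moreover have "(cmod a)^2 > 0" using A2 by simp
  ultimately show ?thesis using a_sq by (simp add: le_divide_eq)
qed

definition g :: "complex \<Rightarrow> complex" where "g w = w + a * w^2"
definition F :: "complex \<Rightarrow> real" where "F w = Re (1 / (1/a + w))"
definition KK :: "complex \<Rightarrow> bool" where "KK w \<longleftrightarrow> cmod (w + 1) \<le> 1"

lemma K_facts: assumes "KK w"
  shows "(Re w)^2 + 2 * Re w + (Im w)^2 \<le> 0" "Re w \<le> 0" "Re w \<ge> -2" "\<bar>Im w\<bar> \<le> 1"
proof -
  have "(cmod (w+1))^2 \<le> 1" using assms KK_def by (simp add: power_le_one)
  hence h: "(Re w + 1)^2 + (Im w)^2 \<le> 1" by (simp add: cmod_power2)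
  have e: "(Re w + 1)^2 = (Re w)^2 + 2 * Re w + 1" by algebra
  show h1: "(Re w)^2 + 2 * Re w + (Im w)^2 \<le> 0" using h e by linarith
  have "2 * Re w \<le> 0" using h1 zero_le_power2[of "Re w"] zero_le_power2[of "Im w"]
    by linarith
  thus "Re w \<le> 0" by simp
  have "(Re w + 1)^2 \<le> 1" using h zero_le_power2[of "Im w"] by linarith
  hence "\<bar>Re w + 1\<bar> \<le> 1" by (simp add: abs_square_le_1)
  thus "Re w \<ge> -2" by linarith
  have "(Im w)^2 \<le> 1" using h zero_le_power2[of "Re w + 1"] by linarith
  thus "\<bar>Im w\<bar> \<le> 1" by (simp add: abs_square_le_1)
qed

lemma K_R: assumes "KK w" "w \<noteq> 0" shows "Re (1/w) \<le> -1/2"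
proof -
  have p: "(cmod w)^2 > 0" using assms by simp
  have "Re w \<le> - ((cmod w)^2 / 2)" using K_facts(1)[OF assms(1)] cmod_power2[of w] by linarith
  thus ?thesis unfolding Re_inv using p by (simp add: divide_le_eq)
qed

lemma R_K: assumes "w \<noteq> 0" "Re (1/w) \<le> -1/2" shows "KK w"
proof -
  have p: "(cmod w)^2 > 0" using assms by simp
  have "Re w \<le> - ((cmod w)^2 / 2)" using assms(2) p unfolding Re_inv by (simp add: divide_le_eq)
  moreover have e: "(Re w + 1)^2 = (Re w)^2 + 2 * Re w + 1" by algebra
  ultimately have "(Re w + 1)^2 + (Im w)^2 \<le> 1" using cmod_power2[of w] by linarith
  hence "(cmod (w+1))^2 \<le> 1^2" by (simp add: cmod_power2)
  thus ?thesis unfolding KK_def by (rule power2_le_imp_le) simp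
qed

lemma F_nonneg: assumes "KK w" shows "F w \<ge> 0"
proof -
  have "Re (1/a + w) \<ge> 0" using b_ge K_facts(3)[OF assms] by simp
  thus ?thesis unfolding F_def Re_inv by simp
qed

lemma g_eq: "g w = a * w * (1/a + w)"
  unfolding g_def using A2 by (simp add: field_simps power2_eq_square)

lemma recip: assumes "w \<noteq> 0" "g w \<noteq> 0" shows "Re (1 / g w) = Re (1/w) - F w"
proof -
  have u: "1/a + w \<noteq> 0" using assms(2) g_eq by auto
  define b where "b = 1/a"
  have b0: "b \<noteq> 0" using A2 b_def by simp
  have ge: "g w = w * (b + w) / b" using A2 by (simp add: g_def b_def field_simps power2_eq_square)
  have u': "b + w \<noteq> 0" using u b_def by simp
  have "1/w - 1/(b + w) = b / (w * (b + w))" using u' assms(1) by (simp add: field_simps)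
  moreover have "1 / g w = b / (w * (b + w))" unfolding ge by simp
  ultimately have "1 / g w = 1/w - 1/(1/a + w)" using b_def by simp
  thus ?thesis unfolding F_def by simp
qed

lemma g_K: assumes "KK w" shows "KK (g w)"
proof (cases "w = 0 \<or> g w = 0")
  case True thus ?thesis by (auto simp: KK_def g_def)
next
  case False
  hence "Re (1 / g w) \<le> -1/2" using recip K_R F_nonneg assms by (smt (verit))
  thus ?thesis using R_K False by blast
qed

definition M :: real where "M = (Re (1/a))^2 + (\<bar>Im (1/a)\<bar> + 1)^2"

lemma M_pos: "M > 0"
  unfolding M_def by (smt (verit) zero_le_power2 zero_less_power abs_ge_zero)

lemma F_lower: assumes "KK w" shows "F w \<ge> (Re (1/a) + Re w) / M"
proof -
  define u where "u = 1/a + w"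
  have ru: "Re u = Re (1/a) + Re w" "Im u = Im (1/a) + Im w" unfolding u_def by simp_all
  have r0: "Re u \<ge> 0" using ru b_ge K_facts(3)[OF assms] by simp
  show ?thesis
  proof (cases "u = 0")
    case True thus ?thesis using ru unfolding F_def u_def[symmetric] by simp
  next
    case False
    have p: "(cmod u)^2 > 0" using False by simp
    have "(Re u)^2 \<le> (Re (1/a))^2" unfolding ru using r0 ru K_facts(2)[OF assms]
      by (intro power_mono) auto
    moreover have "(Im u)^2 \<le> (\<bar>Im (1/a)\<bar> + 1)^2"
    proof -
      have "\<bar>Im u\<bar> \<le> \<bar>Im (1/a)\<bar> + 1" unfolding ru using K_facts(4)[OF assms] by linarith
      hence "\<bar>Im u\<bar>^2 \<le> (\<bar>Im (1/a)\<bar> + 1)^2" by (intro power_mono) auto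
      thus ?thesis by simp
    qed
    ultimately have "(cmod u)^2 \<le> M" unfolding M_def cmod_power2 by linarith
    hence "Re u / M \<le> Re u / (cmod u)^2" using p r0 M_pos by (intro divide_left_mono) auto
    thus ?thesis unfolding F_def Re_inv u_def[symmetric] ru by simp
  qed
qed

lemma two_step: "\<exists>\<delta>>0. \<forall>w. KK w \<longrightarrow> F w + F (g w) \<ge> \<delta>"
proof -
  define \<gamma> where "\<gamma> = 4 * Re a"
  define \<eta> where "\<eta> = min 1 (\<gamma>^2/108)"
  define \<delta> where "\<delta> = min (\<eta>/M) (\<gamma>/(2*M))"
  have gp: "\<gamma> > 0" using a_pos \<gamma>_def by simp
  have ep: "\<eta> > 0" "\<eta> \<le> 1" "\<eta> \<le> \<gamma>^2/108" using gp unfolding \<eta>_def by auto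
  have dp: "\<delta> > 0" using ep gp M_pos unfolding \<delta>_def by auto
  have "F w + F (g w) \<ge> \<delta>" if K: "KK w" for w
  proof (cases "Re (1/a) + Re w \<ge> \<eta>")
    case True
    have "\<eta> / M \<le> (Re (1/a) + Re w) / M" using True M_pos by (intro divide_right_mono) auto
    hence "F w \<ge> \<eta> / M" using F_lower[OF K] by linarith
    moreover have "F (g w) \<ge> 0" using F_nonneg g_K K by blast
    ultimately show ?thesis unfolding \<delta>_def by linarith
  next
    case False
    let ?x = "Re w" and ?y = "Im w"
    have x1: "2 + ?x < \<eta>" using False b_ge by linarith
    have x0: "2 + ?x \<ge> 0" using K_facts(3)[OF K] by linarith
    have e: "(?x + 2)^2 = ?x^2 + 4 * ?x + 4" by algebra
    have y2: "?y^2 \<le> 2 * (2 + ?x)" using K_facts(1)[OF K] e zero_le_power2[of "?x+2"] by (simp add: algebra_simps)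
    have x2: "(2 + ?x)^2 \<le> \<eta>^2" using x0 x1 by (intro power_mono) auto
    have "\<eta>^2 \<le> \<eta>" using ep by (simp add: power2_eq_square mult_le_cancel_left1)
    have "(cmod (w+2))^2 = (2 + ?x)^2 + ?y^2" by (simp add: cmod_power2 add.commute)
    also have "\<dots> \<le> \<gamma>^2/36" 
    proof -
      have "?y^2 \<le> 2 * \<eta>" using y2 x1 by simp
      moreover have "(2 + ?x)^2 \<le> \<eta>" using x2 \<open>\<eta>^2 \<le> \<eta>\<close> by simp
      moreover have "3 * \<eta> \<le> \<gamma>^2/36" using ep(3) by simp
      ultimately show ?thesis by simp
    qed
    also have "\<dots> = (\<gamma>/6)^2" by (simp add: power_divide)
    finally have c2sq: "(cmod (w+2))^2 \<le> (\<gamma>/6)^2" .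
    have c2: "cmod (w+2) \<le> \<gamma>/6" by (rule power2_le_imp_le[OF c2sq]) (use gp in simp)
    have geq: "g w = (4*a - 2) + (w+2)*(1 + a*(w-2))" unfolding g_def by (simp add: algebra_simps power2_eq_square)
    have cw: "cmod (w - 2) \<le> 4"
    proof -
      have "cmod (w - 2) = cmod ((w+1) - 3)" by (simp add: algebra_simps)
      also have "\<dots> \<le> cmod (w+1) + cmod (3::complex)" by (rule norm_triangle_ineq4)
      finally show ?thesis using K unfolding KK_def by simp
    qed
    have c3: "cmod (1 + a*(w-2)) \<le> 3"
    proof -
      have "cmod (1 + a*(w-2)) \<le> 1 + cmod a * cmod (w-2)"
        by (metis norm_one norm_mult norm_triangle_ineq)
      also have "\<dots> \<le> 1 + (1/2) * 4" using a_le cw by (intro add_left_mono mult_mono) auto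
      finally show ?thesis by simp
    qed
    have "cmod ((w+2)*(1 + a*(w-2))) \<le> (\<gamma>/6) * 3" unfolding norm_mult
      using c2 c3 gp by (intro mult_mono) auto
    moreover have "Re ((w+2)*(1 + a*(w-2))) \<ge> - cmod ((w+2)*(1 + a*(w-2)))"
      using abs_Re_le_cmod[of "(w+2)*(1 + a*(w-2))"] by linarith
    ultimately have "Re (g w) \<ge> 4 * Re a - 2 - \<gamma>/2" unfolding geq by simp
    hence "Re (1/a) + Re (g w) \<ge> \<gamma>/2" using b_ge \<gamma>_def by linarith
    hence "(\<gamma>/2) / M \<le> (Re (1/a) + Re (g w)) / M" using M_pos by (intro divide_right_mono) auto
    hence "F (g w) \<ge> (\<gamma>/2) / M" using F_lower[OF g_K[OF K]] by linarith
    moreover have "F w \<ge> 0" using F_nonneg K by blast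
    ultimately show ?thesis unfolding \<delta>_def by simp
  qed
  thus ?thesis using dp by blast
qed

lemma step2: assumes K: "KK w" and d: "F w + F (g w) \<ge> d" and q: "w = 0 \<or> Re (1/w) \<le> -c"
  shows "g (g w) = 0 \<or> Re (1 / g (g w)) \<le> -(c + d)"
proof (cases "w = 0 \<or> g w = 0 \<or> g (g w) = 0")
  case True thus ?thesis by (auto simp: g_def)
next
  case False
  hence n: "w \<noteq> 0" "g w \<noteq> 0" "g (g w) \<noteq> 0" by auto
  have r1: "Re (1 / g w) = Re (1/w) - F w" by (rule recip[OF n(1,2)])
  have r2: "Re (1 / g (g w)) = Re (1/g w) - F (g w)" by (rule recip[OF n(2,3)])
  have "Re (1/w) \<le> -c" using q n(1) by blast
  hence "Re (1 / g (g w)) \<le> -(c + d)" using r1 r2 d by linarith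
  thus ?thesis by blast
qed

lemma iter_K: "KK w \<Longrightarrow> KK ((g^^n) w)"
  by (induction n) (auto intro: g_K)

lemma iter_even: assumes K: "KK w" and d: "\<And>w. KK w \<Longrightarrow> F w + F (g w) \<ge> \<delta>"
  shows "(g^^(2*n)) w = 0 \<or> Re (1 / (g^^(2*n)) w) \<le> -(1/2 + real n * \<delta>)"
proof (induction n)
  case 0 thus ?case using K_R[OF K] by auto
next
  case (Suc n)
  have "g (g ((g^^(2*n)) w)) = 0 \<or> Re (1 / g (g ((g^^(2*n)) w))) \<le> -((1/2 + real n * \<delta>) + \<delta>)"
    by (rule step2[OF iter_K[OF K] d[OF iter_K[OF K]] Suc])
  moreover have "(g^^(2*Suc n)) w = g (g ((g^^(2*n)) w))" by simp
  ultimately show ?case by (simp add: algebra_simps)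
qed

lemma small: assumes "c > 0" "v = 0 \<or> Re (1/v) \<le> -c" shows "cmod v \<le> 1/c"
proof (cases "v = 0")
  case True thus ?thesis using assms by simp
next
  case False
  have "c \<le> cmod (1/v)" using assms(2) False abs_Re_le_cmod[of "1/v"] by linarith
  hence "c \<le> 1 / cmod v" by (simp add: norm_divide)
  hence "c * cmod v \<le> 1" using False by (simp add: le_divide_eq)
  thus ?thesis using assms(1) by (simp add: le_divide_eq mult.commute)
qed

lemma bound_all: assumes K: "KK w" and dp: "\<delta> > 0" and d: "\<And>w. KK w \<Longrightarrow> F w + F (g w) \<ge> \<delta>"
  shows "cmod ((g^^m) w) \<le> 1 / (1/2 + real (m div 2) * \<delta>)"
proof -
  define n where "n = m div 2"
  have "real n * \<delta> \<ge> 0" using dp by simp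
  hence cp: "1/2 + real n * \<delta> > 0" by linarith
  have "(g^^m) w = (g^^(2*n)) w \<or> (g^^m) w = (g^^(2*n)) (g w)"
  proof (cases "m = 2*n")
    case True thus ?thesis by simp
  next
    case False
    hence "m = Suc (2*n)" unfolding n_def by presburger
    hence "(g^^m) w = (g^^(2*n)) (g w)" by (simp only: funpow_Suc_right o_apply)
    thus ?thesis by (rule disjI2)
  qed
  moreover have "cmod ((g^^(2*n)) w) \<le> 1 / (1/2 + real n * \<delta>)"
    using small[OF cp iter_even[OF K d]] .
  moreover have "cmod ((g^^(2*n)) (g w)) \<le> 1 / (1/2 + real n * \<delta>)"
    using small[OF cp iter_even[OF g_K[OF K] d]] .
  ultimately show ?thesis unfolding n_def by metis
qed
end

theorem mainTheorem4:
  fixes a :: complex and \<phi> :: "complex \<Rightarrow> complex"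
  assumes "cmod (a - 1/4) \<le> 1/4" and "a \<noteq> 0"
    and "\<And>z. \<phi> z = a * z^2 + (1 - 2*a) * z + a"
  shows "uniform_limit (ball 0 1) (\<lambda>n. \<phi> ^^ n) (\<lambda>_. 1) sequentially"
proof -
  obtain \<delta> where dp: "\<delta> > 0" and d: "\<And>w. KK w \<Longrightarrow> F a w + F a (g a w) \<ge> \<delta>"
    using two_step[OF assms(1,2)] by blast
  have phig: "\<phi> (1 + v) = 1 + g a v" for v
    unfolding assms(3) g_def[OF assms(1,2)] by (simp add: algebra_simps power2_eq_square)
  have it: "(\<phi>^^n) z = 1 + (g a ^^ n) (z - 1)" for n z
    by (induction n) (simp_all add: phig)
  show ?thesis
    unfolding uniform_limit_sequentially_iff
  proof (intro allI impI)
    fix e :: real assume e: "e > 0"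
    obtain N :: nat where N: "real N > 2 / (e * \<delta>) + 2" using reals_Archimedean2 by blast
    have "\<forall>n\<ge>N. \<forall>z\<in>ball 0 1. dist ((\<phi>^^n) z) 1 < e"
    proof (intro allI impI ballI)
      fix n z assume n: "N \<le> n" and z: "z \<in> ball (0::complex) 1"
      have K: "KK (z - 1)" using z unfolding KK_def[OF assms(1,2)] by (simp add: dist_norm)
      have b: "cmod ((g a ^^ n) (z-1)) \<le> 1 / (1/2 + real (n div 2) * \<delta>)"
        by (rule bound_all[OF assms(1,2) K dp d])
      have "n \<le> 2 * (n div 2) + 1" by presburger
      hence "real n \<le> 2 * real (n div 2) + 1" by linarith
      hence "real (n div 2) > 1 / (e * \<delta>)" using N n by linarith
      hence "real (n div 2) * \<delta> > 1 / e" using dp e by (simp add: field_simps)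
      hence c: "1/2 + real (n div 2) * \<delta> > 1/e" by linarith
      define c where "c = 1/2 + real (n div 2) * \<delta>"
      have c': "1/e < c" using c unfolding c_def .
      have cp: "c > 0" using c' e by (smt (verit) divide_pos_pos)
      have "c * e > 1" using c' e by (simp add: field_simps)
      hence "1 / c < e" using cp by (simp add: divide_less_eq mult.commute)
      moreover have "dist ((\<phi>^^n) z) 1 = cmod ((g a ^^ n) (z-1))" unfolding it by (simp add: dist_norm)
      ultimately show "dist ((\<phi>^^n) z) 1 < e" using b unfolding c_def by linarith
    qed
    thus "\<exists>N. \<forall>n\<ge>N. \<forall>z\<in>ball 0 1. dist ((\<phi>^^n) z) 1 < e" by blast
  qed
qed
end
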